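(* Assume there are constants $\gamma_t\ge 0$ ($t=0,\dots,T-1$) with $|C_t(x)-C_t(y)|\le\gamma_t|x-y|$ for all $x,y$. Then for every $t=0,1,\dots,T-1$ and all $x'\le x$: $H_t(x)-H_t(x')\le\psi_t(x-x',x)$ and $V_t(x)-V_t(x')\le\varphi_t(x-x',x)$.
   Context: Model. Fix an integer horizon $T\ge 2$, a discount factor $\alpha\in(0,1]$, and for $t=0,\dots,T-1$: unit ordering costs $c_t\in\mathbb R$, a salvage coefficient $c_T\in\mathbb R$, setup costs $K_t\ge 0$, functions $G_t:\mathbb R\to\mathbb R$, and independent nonnegative random demands $D_0,\dots,D_{T-1}$ with right-continuous distribution functions $F_t$ and finite means; all expectations appearing are assumed finite. Put $C_t(y)=(c_t-\alpha c_{t+1})y+G_t(y)+\alpha c_{t+1}E[D_t]$. Standing assumptions: (i) each $C_t$ is convex with $C_t(y)\to+\infty$ as $|y|\to\infty$; (ii) $K_t\ge \alpha K_{t+1}$ for $t=0,\dots,T-2$. Grid construction. Fix $\theta>0$, $z_m=m\theta$, $Z_\theta=\{z_m:m\in\mathbb Z\}$, $f_t(n)=F_t(z_{n+1})-F_t(z_n)$ ($n\ge -1$). $C^m_t=\min\{y: C_t(y)=\min_x C_t(x)\}$; with $z_{n_0}<C^m_t\le z_{n_0+1}$, $S^U_t=\min\{z_m\in Z_\theta: z_m\ge C^m_t,\ C_t(z_m)>C_t(z_{n_0})+K_t\}$. $s_{T-1}$ is a point with $s_{T-1}\le C^m_{T-1}$, $C_{T-1}(s_{T-1})=C_{T-1}(C^m_{T-1})+K_{T-1}$;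 $\bar I_{T-1}=s_{T-1}$. For $t=T-2,\dots,0$: $I_t=\max\{z_m\in Z_\theta: z_m<\min(\bar I_{t+1}-\theta,C^m_t)\}$, $\bar I_t=\max\{z_m\in Z_\theta: z_m\le I_t,\ C_t(z_m)>C_t(I_t)+K_t\}+\theta$. $H_{T-1}=C_{T-1}$, $S_{T-1}=C^m_{T-1}$; $V_t(y)=H_t(S_t)+K_t$ for $y<s_t$, $V_t(y)=H_t(y)$ for $y\ge s_t$. For $t=T-2,\dots,0$: $H_t(y)=C_t(y)+\alpha\sum_{n=-1}^\infty V_{t+1}(y-z_n)f_t(n)$; $S_t=\max\{z_m\in Z_\theta: I_t\le z_m\le S^U_t,\ H_t(z_m)=\min\{H_t(z_n):z_n\in Z_\theta, I_t\le z_n\le S^U_t\}\}$; $s_t=S_t$ if $K_t=0$, else $s_t=\min\{z_m\in Z_\theta:\bar I_t\le z_m\le S_t,\ H_t(z_m)\le H_t(S_t)+K_t\}$. Estimate functions. $\psi_{T-1}(x,y)=\gamma_{T-1}x$ for all $x,y$; $\varphi_{T-1}(x,y)=0$ if $y<s_{T-1}$ and $\varphi_{T-1}(x,y)=\gamma_{T-1}x$ if $y\ge s_{T-1}$. For $t=0,\dots,T-2$: $\psi_t(x,y)=\gamma_tx$ if $y<s_{t+1}-\theta$, and otherwise $\psi_t(x,y)=\gamma_tx+\alpha\sum_{m=-1}^{n-1}\varphi_{t+1}(x,y-z_m)f_t(m)$, where $n$ is the integer with $z_{n-1}\le y-s_{t+1}<z_n$; and $\varphi_t(x,y)=0$ if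 $y<s_t$, $\varphi_t(x,y)=\psi_t(y-s_t,y)$ if $y\ge s_t$ and $y-x<s_t$, $\varphi_t(x,y)=\psi_t(x,y)$ if $y\ge s_t$ and $y-x\ge s_t$. *)

theory Defs
  imports "HOL-Probability.Probability"
begin

text \<open>Demand of period t has distribution M t (a probability measure on the reals);
  its distribution function is cdf (M t) and its mean is the Lebesgue integral.\<close>

definition Ccost :: "real \<Rightarrow> (nat \<Rightarrow> real) \<Rightarrow> (nat \<Rightarrow> real \<Rightarrow> real) \<Rightarrow> (nat \<Rightarrow> real measure)
    \<Rightarrow> nat \<Rightarrow> real \<Rightarrow> real" where
  "Ccost \<alpha> c G M t y = (c t - \<alpha> * c (Suc t)) * y + G t y + \<alpha> * c (Suc t) * (\<integral>d. d \<partial>M t)"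

definition Cm :: "(nat \<Rightarrow> real \<Rightarrow> real) \<Rightarrow> nat \<Rightarrow> real" where
  "Cm C t = Inf {y. \<forall>x. C t y \<le> C t x}"

definition zg :: "real \<Rightarrow> int \<Rightarrow> real" where
  "zg \<theta> m = of_int m * \<theta>"

definition grid :: "real \<Rightarrow> real set" where
  "grid \<theta> = range (zg \<theta>)"

definition n0 :: "(nat \<Rightarrow> real \<Rightarrow> real) \<Rightarrow> real \<Rightarrow> nat \<Rightarrow> int" where
  "n0 C \<theta> t = (THE n::int. zg \<theta> n < Cm C t \<and> Cm C t \<le> zg \<theta> (n + 1))"

definition SU :: "(nat \<Rightarrow> real \<Rightarrow> real) \<Rightarrow> (nat \<Rightarrow> real) \<Rightarrow> real \<Rightarrow> nat \<Rightarrow> real" where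
  "SU C K \<theta> t = Inf {z \<in> grid \<theta>. Cm C t \<le> z \<and> C t z > C t (zg \<theta> (n0 C \<theta> t)) + K t}"

definition sLast :: "(nat \<Rightarrow> real \<Rightarrow> real) \<Rightarrow> (nat \<Rightarrow> real) \<Rightarrow> nat \<Rightarrow> real" where
  "sLast C K T = (SOME s. s \<le> Cm C (T - 1) \<and> C (T - 1) s = C (T - 1) (Cm C (T - 1)) + K (T - 1))"

definition fprob :: "real \<Rightarrow> (nat \<Rightarrow> real \<Rightarrow> real) \<Rightarrow> nat \<Rightarrow> int \<Rightarrow> real" where
  "fprob \<theta> F t n = F t (zg \<theta> (n + 1)) - F t (zg \<theta> n)"

definition Vof :: "(real \<Rightarrow> real) \<Rightarrow> real \<Rightarrow> real \<Rightarrow> real \<Rightarrow> real \<Rightarrow> real" where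
  "Vof H S s Kt y = (if y < s then H S + Kt else H y)"

text \<open>A stage is the tuple (H_t, S_t, s_t, Ibar_t).\<close>
type_synonym stage = "(real \<Rightarrow> real) \<times> real \<times> real \<times> real"

definition step :: "(nat \<Rightarrow> real \<Rightarrow> real) \<Rightarrow> (nat \<Rightarrow> real) \<Rightarrow> real \<Rightarrow> real
    \<Rightarrow> (nat \<Rightarrow> real \<Rightarrow> real) \<Rightarrow> nat \<Rightarrow> stage \<Rightarrow> stage" where
  "step C K \<alpha> \<theta> F t st =
    (let (H', S', s', Ib') = st;
         I = Sup {z \<in> grid \<theta>. z < min (Ib' - \<theta>) (Cm C t)};
         Ib = Sup {z \<in> grid \<theta>. z \<le> I \<and> C t z > C t I + K t} + \<theta>;
         H = (\<lambda>y. C t y + \<alpha> * (\<Sum>k. Vof H' S' s' (K (Suc t)) (y - zg \<theta> (int k - 1))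
                                     * fprob \<theta> F t (int k - 1)));
         R = {z \<in> grid \<theta>. I \<le> z \<and> z \<le> SU C K \<theta> t};
         S = Sup {z \<in> R. H z = Inf (H ` R)};
         s = (if K t = 0 then S
              else Inf {z \<in> grid \<theta>. Ib \<le> z \<and> z \<le> S \<and> H z \<le> H S + K t})
     in (H, S, s, Ib))"

text \<open>stages ... k is the stage of period t = T - 1 - k.\<close>
primrec stages :: "(nat \<Rightarrow> real \<Rightarrow> real) \<Rightarrow> (nat \<Rightarrow> real) \<Rightarrow> real \<Rightarrow> real
    \<Rightarrow> (nat \<Rightarrow> real \<Rightarrow> real) \<Rightarrow> nat \<Rightarrow> nat \<Rightarrow> stage" where
  "stages C K \<alpha> \<theta> F T 0 = (C (T - 1), Cm C (T - 1), sLast C K T, sLast C K T)"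
| "stages C K \<alpha> \<theta> F T (Suc k) = step C K \<alpha> \<theta> F (T - 2 - k) (stages C K \<alpha> \<theta> F T k)"

definition Hfun where "Hfun C K \<alpha> \<theta> F T t = fst (stages C K \<alpha> \<theta> F T (T - 1 - t))"
definition Sfun where "Sfun C K \<alpha> \<theta> F T t = fst (snd (stages C K \<alpha> \<theta> F T (T - 1 - t)))"
definition sfun where "sfun C K \<alpha> \<theta> F T t = fst (snd (snd (stages C K \<alpha> \<theta> F T (T - 1 - t))))"
definition Vfun :: "(nat \<Rightarrow> real \<Rightarrow> real) \<Rightarrow> (nat \<Rightarrow> real) \<Rightarrow> real \<Rightarrow> real
    \<Rightarrow> (nat \<Rightarrow> real \<Rightarrow> real) \<Rightarrow> nat \<Rightarrow> nat \<Rightarrow> real \<Rightarrow> real" where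
  "Vfun C K \<alpha> \<theta> F T t y =
     Vof (Hfun C K \<alpha> \<theta> F T t) (Sfun C K \<alpha> \<theta> F T t) (sfun C K \<alpha> \<theta> F T t) (K t) y"

definition psi_step :: "(nat \<Rightarrow> real) \<Rightarrow> real \<Rightarrow> real \<Rightarrow> (nat \<Rightarrow> real \<Rightarrow> real) \<Rightarrow> real \<Rightarrow> nat
    \<Rightarrow> (real \<Rightarrow> real \<Rightarrow> real) \<Rightarrow> real \<Rightarrow> real \<Rightarrow> real" where
  "psi_step \<gamma> \<alpha> \<theta> F s' t phi' x y =
    (if y < s' - \<theta> then \<gamma> t * x
     else (let n = (THE n::int. zg \<theta> (n - 1) \<le> y - s' \<and> y - s' < zg \<theta> n)
           in \<gamma> t * x + \<alpha> * (\<Sum>m\<in>{-1..n - 1}. phi' x (y - zg \<theta> m) * fprob \<theta> F t m)))"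

definition phi_of :: "real \<Rightarrow> (real \<Rightarrow> real \<Rightarrow> real) \<Rightarrow> real \<Rightarrow> real \<Rightarrow> real" where
  "phi_of st ps x y = (if y < st then 0 else if y - x < st then ps (y - st) y else ps x y)"

text \<open>phis ... k is phi_t for t = T - 1 - k.\<close>
primrec phis :: "(nat \<Rightarrow> real \<Rightarrow> real) \<Rightarrow> (nat \<Rightarrow> real) \<Rightarrow> real \<Rightarrow> real
    \<Rightarrow> (nat \<Rightarrow> real \<Rightarrow> real) \<Rightarrow> nat \<Rightarrow> (nat \<Rightarrow> real) \<Rightarrow> nat \<Rightarrow> real \<Rightarrow> real \<Rightarrow> real" where
  "phis C K \<alpha> \<theta> F T \<gamma> 0 =
     (\<lambda>x y. if y < sfun C K \<alpha> \<theta> F T (T - 1) then 0 else \<gamma> (T - 1) * x)"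
| "phis C K \<alpha> \<theta> F T \<gamma> (Suc k) =
     phi_of (sfun C K \<alpha> \<theta> F T (T - 2 - k))
       (psi_step \<gamma> \<alpha> \<theta> F (sfun C K \<alpha> \<theta> F T (T - 1 - k)) (T - 2 - k) (phis C K \<alpha> \<theta> F T \<gamma> k))"

definition phifun where
  "phifun C K \<alpha> \<theta> F T \<gamma> t = phis C K \<alpha> \<theta> F T \<gamma> (T - 1 - t)"

definition psifun :: "(nat \<Rightarrow> real \<Rightarrow> real) \<Rightarrow> (nat \<Rightarrow> real) \<Rightarrow> real \<Rightarrow> real
    \<Rightarrow> (nat \<Rightarrow> real \<Rightarrow> real) \<Rightarrow> nat \<Rightarrow> (nat \<Rightarrow> real) \<Rightarrow> nat \<Rightarrow> real \<Rightarrow> real \<Rightarrow> real" where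
  "psifun C K \<alpha> \<theta> F T \<gamma> t =
     (if t = T - 1 then (\<lambda>x y. \<gamma> (T - 1) * x)
      else psi_step \<gamma> \<alpha> \<theta> F (sfun C K \<alpha> \<theta> F T (Suc t)) t (phifun C K \<alpha> \<theta> F T \<gamma> (Suc t)))"

end

theory Submission
  imports Defs
begin

lemma grid_iff: "z \<in> grid \<theta> \<longleftrightarrow> (\<exists>m. z = of_int m * \<theta>)"
  by (auto simp: grid_def zg_def)

lemma grid_finite:
  assumes "0 < \<theta>"
  shows "finite {z \<in> grid \<theta>. a \<le> z \<and> z \<le> b}"
proof -
  have "{z \<in> grid \<theta>. a \<le> z \<and> z \<le> b} \<subseteq> zg \<theta> ` {\<lceil>a/\<theta>\<rceil>..\<lfloor>b/\<theta>\<rfloor>}"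
  proof
    fix z assume z: "z \<in> {z \<in> grid \<theta>. a \<le> z \<and> z \<le> b}"
    then obtain m where m: "z = of_int m * \<theta>" by (auto simp: grid_iff)
    have "a / \<theta> \<le> of_int m" using z m assms by (simp add: pos_divide_le_eq)
    hence "\<lceil>a/\<theta>\<rceil> \<le> m" by (simp add: ceiling_le_iff)
    moreover have "of_int m \<le> b / \<theta>" using z m assms by (simp add: pos_le_divide_eq)
    hence "m \<le> \<lfloor>b/\<theta>\<rfloor>" by (simp add: le_floor_iff)
    ultimately show "z \<in> zg \<theta> ` {\<lceil>a/\<theta>\<rceil>..\<lfloor>b/\<theta>\<rfloor>}" using m by (auto simp: zg_def)
  qed
  thus ?thesis by (rule finite_subset) simp
qed

lemma grid_below:
  assumes "0 < \<theta>" shows "\<exists>z \<in> grid \<theta>. z \<le> a"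
proof -
  have "of_int \<lfloor>a/\<theta>\<rfloor> * \<theta> \<le> a"
    using assms by (simp add: pos_le_divide_eq[symmetric])
  thus ?thesis by (auto simp: grid_iff)
qed

lemma grid_above:
  assumes "0 < \<theta>" shows "\<exists>z \<in> grid \<theta>. a \<le> z"
proof -
  have "a \<le> of_int \<lceil>a/\<theta>\<rceil> * \<theta>"
    using assms by (simp add: pos_divide_le_eq[symmetric])
  thus ?thesis by (auto simp: grid_iff)
qed

lemma grid_gap:
  assumes "0 < \<theta>" "z \<in> grid \<theta>" "w \<in> grid \<theta>" "z < w"
  shows "z \<le> w - \<theta>"
proof -
  obtain m k where mk: "z = of_int m * \<theta>" "w = of_int k * \<theta>" using assms by (auto simp: grid_iff)
  have "m < k" using assms mk by (simp add: mult_less_cancel_right)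
  hence "m \<le> k - 1" by simp
  hence "of_int m * \<theta> \<le> of_int (k - 1) * \<theta>" using assms by (simp add: mult_right_mono)
  thus ?thesis using mk by (simp add: algebra_simps)
qed

lemma grid_Sup_mem:
  assumes "0 < \<theta>" "P \<subseteq> grid \<theta>" "p \<in> P" "\<forall>z\<in>P. z \<le> b"
  shows "Sup P \<in> P"
proof -
  let ?Q = "{z \<in> P. p \<le> z}"
  have fin: "finite ?Q"
    by (rule finite_subset[OF _ grid_finite[OF assms(1), of p b]]) (use assms in auto)
  have ne: "?Q \<noteq> {}" using assms by auto
  have mem: "Max ?Q \<in> P" using Max_in[OF fin ne] by auto
  have "\<forall>x\<in>P. x \<le> Max ?Q"
  proof
    fix x assume x: "x \<in> P"
    show "x \<le> Max ?Q"
    proof (cases "p \<le> x")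
      case True thus ?thesis using Max_ge[OF fin] x by auto
    next
      case False thus ?thesis using Max_ge[OF fin, of p] assms(3) by auto
    qed
  qed
  hence "Sup P = Max ?Q" using cSup_eq_maximum[OF mem] by blast
  thus ?thesis using mem by simp
qed

lemma step_H:
  "fst (step C K \<alpha> \<theta> F t (H', S', s', Ib')) =
   (\<lambda>y. C t y + \<alpha> * (\<Sum>k. Vof H' S' s' (K (Suc t)) (y - zg \<theta> (int k - 1)) * fprob \<theta> F t (int k - 1)))"
  by (simp add: step_def Let_def)

lemma coerc_bot:
  assumes "filterlim f at_top at_bot" shows "\<exists>b. \<forall>z\<le>b. (M::real) < f (z::real)"
proof -
  have "eventually (\<lambda>z. M < f z) at_bot"
    using assms by (simp add: filterlim_at_top_dense)
  thus ?thesis by (simp add: eventually_at_bot_linorder)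
qed

lemma coerc_top:
  assumes "filterlim f at_top at_top" shows "\<exists>b. \<forall>z\<ge>b. (M::real) < f (z::real)"
proof -
  have "eventually (\<lambda>z. M < f z) at_top"
    using assms by (simp add: filterlim_at_top_dense)
  thus ?thesis by (simp add: eventually_at_top_linorder)
qed

lemma step_sS:
  assumes th: "0 < \<theta>" and K0: "0 \<le> K t"
    and cb: "\<And>M. \<exists>b. \<forall>z\<le>b. M < C t z"
    and ct: "\<And>M. \<exists>b. \<forall>z\<ge>b. M < C t z"
    and st: "step C K \<alpha> \<theta> F t (H', S', s', Ib') = (H, S, s, Ib)"
  shows "H s \<le> H S + K t"
proof -
  define I where "I = Sup {z \<in> grid \<theta>. z < min (Ib' - \<theta>) (Cm C t)}"
  define Ib0 where "Ib0 = Sup {z \<in> grid \<theta>. z \<le> I \<and> C t z > C t I + K t} + \<theta>"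
  define H0 where "H0 = (\<lambda>y. C t y + \<alpha> * (\<Sum>k. Vof H' S' s' (K (Suc t)) (y - zg \<theta> (int k - 1))
                                     * fprob \<theta> F t (int k - 1)))"
  define R where "R = {z \<in> grid \<theta>. I \<le> z \<and> z \<le> SU C K \<theta> t}"
  define S0 where "S0 = Sup {z \<in> R. H0 z = Inf (H0 ` R)}"
  define s0 where "s0 = (if K t = 0 then S0
              else Inf {z \<in> grid \<theta>. Ib0 \<le> z \<and> z \<le> S0 \<and> H0 z \<le> H0 S0 + K t})"
  have "step C K \<alpha> \<theta> F t (H', S', s', Ib') = (H0, S0, s0, Ib0)"
    unfolding step_def I_def Ib0_def H0_def R_def S0_def s0_def by (simp add: Let_def)
  hence eqs: "H = H0" "S = S0" "s = s0" "Ib = Ib0" using st by auto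
  let ?P = "{z \<in> grid \<theta>. z < min (Ib' - \<theta>) (Cm C t)}"
  obtain p where p: "p \<in> grid \<theta>" "p \<le> min (Ib' - \<theta>) (Cm C t) - 1" using grid_below[OF th] by blast
  have Imem: "I \<in> ?P" unfolding I_def
    by (rule grid_Sup_mem[OF th, of _ p "min (Ib' - \<theta>) (Cm C t)"]) (use p in auto)
  hence Ig: "I \<in> grid \<theta>" and ICm: "I < Cm C t" by auto
  let ?Q = "{z \<in> grid \<theta>. Cm C t \<le> z \<and> C t z > C t (zg \<theta> (n0 C \<theta> t)) + K t}"
  obtain b where b: "\<forall>z\<ge>b. C t (zg \<theta> (n0 C \<theta> t)) + K t < C t z" using ct by blast
  obtain q where q: "q \<in> grid \<theta>" "max b (Cm C t) \<le> q" using grid_above[OF th] by blast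
  have "q \<in> ?Q" using q b by auto
  hence "Cm C t \<le> SU C K \<theta> t" unfolding SU_def
    by (intro cInf_greatest) auto
  hence ISU: "I \<le> SU C K \<theta> t" using ICm by simp
  have Rfin: "finite R" unfolding R_def by (rule grid_finite[OF th])
  have IR: "I \<in> R" using Ig ISU by (simp add: R_def)
  hence Rne: "R \<noteq> {}" by auto
  obtain r where r: "r \<in> R" "H0 r = Inf (H0 ` R)"
  proof -
    have "Inf (H0 ` R) \<in> H0 ` R" using Rfin Rne by (simp add: cInf_eq_Min)
    thus ?thesis using that by auto
  qed
  let ?B = "{z \<in> R. H0 z = Inf (H0 ` R)}"
  have "S0 \<in> ?B" unfolding S0_def
    by (rule grid_Sup_mem[OF th, of _ r "SU C K \<theta> t"]) (use r in \<open>auto simp: R_def\<close>)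
  hence S0g: "S0 \<in> grid \<theta>" and IS0: "I \<le> S0" by (auto simp: R_def)
  let ?W = "{z \<in> grid \<theta>. z \<le> I \<and> C t z > C t I + K t}"
  obtain b2 where b2: "\<forall>z\<le>b2. C t I + K t < C t z" using cb by blast
  obtain w where w: "w \<in> grid \<theta>" "w \<le> min b2 I" using grid_below[OF th] by blast
  have "w \<in> ?W" using w b2 by auto
  moreover have "\<forall>z\<in>?W. z \<le> I - \<theta>"
  proof
    fix z assume z: "z \<in> ?W"
    hence "z \<noteq> I" using K0 by auto
    hence "z < I" using z by auto
    thus "z \<le> I - \<theta>" using grid_gap[OF th _ Ig] z by auto
  qed
  ultimately have "Sup ?W \<le> I - \<theta>" by (intro cSup_least) auto
  hence IbI: "Ib0 \<le> I" unfolding Ib0_def by simp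
  show ?thesis
  proof (cases "K t = 0")
    case True thus ?thesis using eqs by (simp add: s0_def)
  next
    case False
    let ?A = "{z \<in> grid \<theta>. Ib0 \<le> z \<and> z \<le> S0 \<and> H0 z \<le> H0 S0 + K t}"
    have Afin: "finite ?A"
      by (rule finite_subset[OF _ grid_finite[OF th, of Ib0 S0]]) auto
    have "S0 \<in> ?A" using S0g IbI IS0 K0 by auto
    hence ne: "?A \<noteq> {}" by auto
    have "s0 = Min ?A" using False Afin ne by (simp add: s0_def cInf_eq_Min)
    hence "s0 \<in> ?A" using Min_in[OF Afin ne] by simp
    thus ?thesis using eqs by auto
  qed
qed

lemma fprob_nonneg:
  assumes "real_distribution N" "F t = cdf N" "0 < \<theta>"
  shows "0 \<le> fprob \<theta> F t n"
proof -
  have "zg \<theta> n \<le> zg \<theta> (n + 1)" using assms(3) by (simp add: zg_def algebra_simps)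
  thus ?thesis using finite_borel_measure.cdf_nondecreasing[OF real_distribution.finite_borel_measure_M[OF assms(1)]] assms(2)
    by (simp add: fprob_def)
qed

lemma fprob_summable:
  assumes "real_distribution N" "F t = cdf N" "0 < \<theta>"
  shows "summable (\<lambda>k. fprob \<theta> F t (int k - 1))"
proof -
  define g where "g k = F t (zg \<theta> (int k - 1))" for k :: nat
  have inc: "incseq g" unfolding incseq_Suc_iff g_def
    using finite_borel_measure.cdf_nondecreasing[OF real_distribution.finite_borel_measure_M[OF assms(1)]] assms(2,3)
    by (auto simp: zg_def algebra_simps)
  have bdd: "bdd_above (range g)" unfolding g_def
    using real_distribution.cdf_bounded_prob[OF assms(1)] assms(2)
    by (intro bdd_aboveI[of _ 1]) auto
  have "summable (\<lambda>k. g (Suc k) - g k)"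
    by (rule telescope_summable[OF LIMSEQ_incseq_SUP[OF bdd inc]])
  moreover have "(\<lambda>k. g (Suc k) - g k) = (\<lambda>k. fprob \<theta> F t (int k - 1))"
    by (auto simp: g_def fprob_def)
  ultimately show ?thesis by simp
qed

lemma ev_below:
  assumes "0 < \<theta>"
  shows "\<exists>N. \<forall>k\<ge>N. y - zg \<theta> (int k - 1) < s'"
proof -
  define N where "N = nat \<lceil>(y - s')/\<theta>\<rceil> + 2"
  have "\<forall>k\<ge>N. y - zg \<theta> (int k - 1) < s'"
  proof (intro allI impI)
    fix k assume "N \<le> k"
    hence "of_int \<lceil>(y - s')/\<theta>\<rceil> + 1 \<le> real_of_int (int k - 1)" unfolding N_def by linarith
    moreover have "(y - s')/\<theta> \<le> of_int \<lceil>(y - s')/\<theta>\<rceil>" by simp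
    ultimately have "(y - s')/\<theta> < real_of_int (int k - 1)" by linarith
    hence "y - s' < real_of_int (int k - 1) * \<theta>" using assms by (simp add: pos_divide_less_eq)
    thus "y - zg \<theta> (int k - 1) < s'" by (simp add: zg_def)
  qed
  thus ?thesis by blast
qed

lemma H_step_bound:
  fixes V' :: "real \<Rightarrow> real" and phi' :: "real \<Rightarrow> real \<Rightarrow> real" and Ct :: "real \<Rightarrow> real"
  assumes th: "0 < \<theta>" and al: "0 < \<alpha>"
    and fnn: "\<And>n. 0 \<le> fprob \<theta> F t n" and fs: "summable (\<lambda>k. fprob \<theta> F t (int k - 1))"
    and Vc: "\<And>y. y < s' \<Longrightarrow> V' y = cc"
    and Vb: "\<And>x x'. x' \<le> x \<Longrightarrow> V' x - V' x' \<le> phi' (x - x') x"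
    and p0: "\<And>x y. y < s' \<Longrightarrow> phi' x y = 0"
    and Lip: "\<And>x y. \<bar>Ct x - Ct y\<bar> \<le> \<gamma> t * \<bar>x - y\<bar>"
    and xx: "x' \<le> x"
  shows "(Ct x + \<alpha> * (\<Sum>k. V' (x - zg \<theta> (int k - 1)) * fprob \<theta> F t (int k - 1)))
       - (Ct x' + \<alpha> * (\<Sum>k. V' (x' - zg \<theta> (int k - 1)) * fprob \<theta> F t (int k - 1)))
       \<le> psi_step \<gamma> \<alpha> \<theta> F s' t phi' (x - x') x"
proof -
  define f where "f k = fprob \<theta> F t (int k - 1)" for k
  define a where "a k = V' (x - zg \<theta> (int k - 1)) * f k" for k
  define b where "b k = V' (x' - zg \<theta> (int k - 1)) * f k" for k
  define d where "d k = phi' (x - x') (x - zg \<theta> (int k - 1)) * f k" for k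
  have sumV: "summable (\<lambda>k. V' (y - zg \<theta> (int k - 1)) * f k)" for y
  proof -
    obtain N where N: "\<forall>k\<ge>N. y - zg \<theta> (int k - 1) < s'" using ev_below[OF th] by blast
    have ev: "eventually (\<lambda>k. V' (y - zg \<theta> (int k - 1)) * f k = cc * f k) sequentially"
      using N Vc by (auto simp: eventually_at_top_linorder)
    moreover have "summable (\<lambda>k. cc * f k)" using fs by (simp add: f_def summable_mult)
    ultimately show ?thesis using summable_cong[OF ev] by simp
  qed
  obtain N where N: "\<forall>k\<ge>N. x - zg \<theta> (int k - 1) < s'" using ev_below[OF th] by blast
  have dz: "d k = 0" if "k \<ge> N" for k using N p0 that by (simp add: d_def)
  have ds: "summable d"
  proof -
    have "eventually (\<lambda>k. d k = 0) sequentially" using dz by (auto simp: eventually_at_top_linorder)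
    thus ?thesis using summable_cong[of d "\<lambda>_. 0"] by simp
  qed
  have abd: "a k - b k \<le> d k" for k
  proof -
    have "V' (x - zg \<theta> (int k - 1)) - V' (x' - zg \<theta> (int k - 1)) \<le> phi' (x - x') (x - zg \<theta> (int k - 1))"
      using Vb[of "x' - zg \<theta> (int k - 1)" "x - zg \<theta> (int k - 1)"] xx by simp
    hence "(V' (x - zg \<theta> (int k - 1)) - V' (x' - zg \<theta> (int k - 1))) * f k \<le> d k"
      unfolding d_def using fnn by (intro mult_right_mono) (auto simp: f_def)
    thus ?thesis by (simp add: a_def b_def algebra_simps)
  qed
  have sa: "summable a" using sumV[of x] by (simp add: a_def[abs_def])
  have sb: "summable b" using sumV[of x'] by (simp add: b_def[abs_def])
  have "suminf a - suminf b = suminf (\<lambda>k. a k - b k)" using suminf_diff[OF sa sb] by simp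
  also have "\<dots> \<le> suminf d" by (rule suminf_le[OF abd summable_diff[OF sa sb] ds])
  finally have main: "suminf a - suminf b \<le> suminf d" .
  have C: "Ct x - Ct x' \<le> \<gamma> t * (x - x')" using Lip[of x x'] xx by simp
  have lhs: "(Ct x + \<alpha> * (\<Sum>k. V' (x - zg \<theta> (int k - 1)) * fprob \<theta> F t (int k - 1)))
       - (Ct x' + \<alpha> * (\<Sum>k. V' (x' - zg \<theta> (int k - 1)) * fprob \<theta> F t (int k - 1)))
       = (Ct x - Ct x') + \<alpha> * (suminf a - suminf b)"
    unfolding a_def[abs_def] b_def[abs_def] f_def[abs_def] by (simp add: algebra_simps)
  have lhs_le: "\<dots> \<le> \<gamma> t * (x - x') + \<alpha> * suminf d"
    using C main al by (intro add_mono mult_left_mono) auto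
  show ?thesis
  proof (cases "x < s' - \<theta>")
    case True
    have "d k = 0" for k
    proof -
      have "(-1) * \<theta> \<le> (real k - 1) * \<theta>" using th by (intro mult_right_mono) auto
      hence "zg \<theta> (-1) \<le> zg \<theta> (int k - 1)" by (simp add: zg_def)
      hence "x - zg \<theta> (int k - 1) < s'" using True by (simp add: zg_def)
      thus ?thesis by (simp add: d_def p0)
    qed
    hence "d = (\<lambda>_. 0)" by auto
    hence "suminf d = 0" by simp
    thus ?thesis using lhs lhs_le True by (simp add: psi_step_def)
  next
    case False
    define u where "u = x - s'"
    define n0 where "n0 = \<lfloor>u/\<theta>\<rfloor> + 1"
    have Pn0: "zg \<theta> (n0 - 1) \<le> u \<and> u < zg \<theta> n0"
    proof
      have "of_int \<lfloor>u/\<theta>\<rfloor> * \<theta> \<le> u" using th by (simp add: pos_le_divide_eq[symmetric])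
      thus "zg \<theta> (n0 - 1) \<le> u" by (simp add: zg_def n0_def)
      have "u/\<theta> < of_int (\<lfloor>u/\<theta>\<rfloor> + 1)" by linarith
      hence "u < of_int (\<lfloor>u/\<theta>\<rfloor> + 1) * \<theta>" using th by (simp only: pos_divide_less_eq)
      thus "u < zg \<theta> n0" by (simp add: zg_def n0_def)
    qed
    have uniq: "m = n0" if "zg \<theta> (m - 1) \<le> u \<and> u < zg \<theta> m" for m
    proof -
      have "of_int (m - 1) \<le> u/\<theta>" "u/\<theta> < of_int m"
        using that th by (auto simp: zg_def pos_le_divide_eq pos_divide_less_eq)
      hence "\<lfloor>u/\<theta>\<rfloor> = m - 1" by (intro floor_unique) auto
      thus ?thesis by (simp add: n0_def)
    qed
    have theN: "(THE n::int. zg \<theta> (n - 1) \<le> x - s' \<and> x - s' < zg \<theta> n) = n0"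
      unfolding u_def[symmetric] using Pn0 uniq by (rule the_equality)
    have n0pos: "0 \<le> n0"
    proof -
      have "-\<theta> \<le> u" using False by (simp add: u_def)
      hence "zg \<theta> (-1) < zg \<theta> n0" using Pn0 by (simp add: zg_def)
      hence "(-1) * \<theta> < real_of_int n0 * \<theta>" by (simp add: zg_def)
      hence "(-1::real) < real_of_int n0" using th mult_less_cancel_right_pos by blast
      hence "-1 < n0" by linarith
      thus ?thesis by simp
    qed
    have dz2: "d k = 0" if "k \<notin> {..<nat (n0 + 1)}" for k
    proof -
      have "n0 \<le> int k - 1" using that n0pos by auto
      hence "zg \<theta> n0 \<le> zg \<theta> (int k - 1)" using th by (simp add: zg_def mult_right_mono)
      hence "x - zg \<theta> (int k - 1) < s'" using Pn0 by (simp add: u_def)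
      thus ?thesis by (simp add: d_def p0)
    qed
    have "d sums (\<Sum>k\<in>{..<nat (n0 + 1)}. d k)" by (rule sums_finite) (use dz2 in auto)
    hence "suminf d = (\<Sum>k\<in>{..<nat (n0 + 1)}. d k)" by (simp add: sums_iff)
    also have "\<dots> = (\<Sum>m\<in>{-1..n0 - 1}. phi' (x - x') (x - zg \<theta> m) * fprob \<theta> F t m)"
      unfolding d_def f_def
      by (rule sum.reindex_bij_witness[of _ "\<lambda>m. nat (m + 1)" "\<lambda>k. int k - 1"]) (use n0pos in auto)
    finally show ?thesis using lhs lhs_le False theN by (simp add: psi_step_def Let_def)
  qed
qed

lemma V_bound:
  assumes Hb: "\<And>x x'. x' \<le> x \<Longrightarrow> H x - H x' \<le> ps (x - x') x"
    and sS: "H s \<le> H S + Kt" and xx: "x' \<le> x"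
  shows "Vof H S s Kt x - Vof H S s Kt x' \<le> phi_of s ps (x - x') x"
proof (cases "x < s")
  case True thus ?thesis using xx by (simp add: Vof_def phi_of_def)
next
  case False
  show ?thesis
  proof (cases "x' < s")
    case True
    have "H x - H s \<le> ps (x - s) x" using Hb[of s x] False by simp
    thus ?thesis using True False sS by (simp add: Vof_def phi_of_def)
  next
    case F2: False
    thus ?thesis using False Hb[OF xx] by (simp add: Vof_def phi_of_def)
  qed
qed

lemma sLast_prop:
  fixes Ct :: "real \<Rightarrow> real"
  assumes Lip: "\<And>x y. \<bar>Ct x - Ct y\<bar> \<le> g * \<bar>x - y\<bar>" and g: "0 \<le> g"
    and cb: "\<And>M. \<exists>b. \<forall>z\<le>b. M < Ct z" and Kp: "0 \<le> Kt"
    and e: "C (T - 1) = Ct" "K (T - 1) = Kt"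
  shows "Ct (sLast C K T) = Ct (Cm C (T - 1)) + Kt"
proof -
  let ?m = "Cm C (T - 1)"
  obtain b where b: "\<forall>z\<le>b. Ct ?m + Kt < Ct z" using cb by blast
  let ?a = "min b ?m"
  have cont: "continuous_on {?a..?m} Ct"
    by (rule lipschitz_on_continuous_on[of g]) (use Lip g in \<open>auto simp: lipschitz_on_def dist_real_def\<close>)
  have "Ct ?m + Kt < Ct ?a" using b by (meson min.cobounded1)
  hence "Ct ?m \<le> Ct ?m + Kt" "Ct ?m + Kt \<le> Ct ?a" using Kp by auto
  then obtain s where s: "?a \<le> s" "s \<le> ?m" "Ct s = Ct ?m + Kt"
    using IVT2'[OF _ _ _ cont] by fastforce
  hence "\<exists>s. s \<le> Cm C (T - 1) \<and> C (T - 1) s = C (T - 1) (Cm C (T - 1)) + K (T - 1)"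
    using e by auto
  hence "sLast C K T \<le> Cm C (T - 1) \<and> C (T - 1) (sLast C K T) = C (T - 1) (Cm C (T - 1)) + K (T - 1)"
    unfolding sLast_def by (rule someI_ex)
  thus ?thesis using e by simp
qed

lemma phifun_zero:
  assumes "t < T" "y < sfun C K \<alpha> \<theta> F T t"
  shows "phifun C K \<alpha> \<theta> F T \<gamma> t x y = 0"
proof (cases "T - 1 - t")
  case 0
  hence "t = T - 1" using assms by simp
  thus ?thesis using assms 0 by (simp add: phifun_def)
next
  case (Suc i)
  hence "T - 2 - i = t" using assms by simp
  thus ?thesis using assms Suc by (simp add: phifun_def phi_of_def)
qed

theorem lemma4p3:
  fixes T :: nat and \<alpha> \<theta> :: real and c K \<gamma> :: "nat \<Rightarrow> real"
    and G :: "nat \<Rightarrow> real \<Rightarrow> real" and M :: "nat \<Rightarrow> real measure"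
  defines "C \<equiv> Ccost \<alpha> c G M"
      and "F \<equiv> (\<lambda>t x. cdf (M t) x)"
  assumes "2 \<le> T" and "0 < \<alpha>" and "\<alpha> \<le> 1" and "0 < \<theta>"
    and "\<forall>t<T. 0 \<le> K t"
    and "\<forall>t<T. real_distribution (M t)"
    and "\<forall>t<T. AE d in M t. 0 \<le> d"
    and "\<forall>t<T. integrable (M t) (\<lambda>d. d)"
    and "\<forall>t<T. convex_on UNIV (C t)"
    and "\<forall>t<T. filterlim (C t) at_top at_top \<and> filterlim (C t) at_top at_bot"
    and "\<forall>t. t + 2 \<le> T \<longrightarrow> \<alpha> * K (Suc t) \<le> K t"
    and "\<forall>t<T. 0 \<le> \<gamma> t \<and> (\<forall>x y. \<bar>C t x - C t y\<bar> \<le> \<gamma> t * \<bar>x - y\<bar>)"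
  shows "\<forall>t<T. \<forall>x x'. x' \<le> x \<longrightarrow>
           Hfun C K \<alpha> \<theta> F T t x - Hfun C K \<alpha> \<theta> F T t x' \<le> psifun C K \<alpha> \<theta> F T \<gamma> t (x - x') x
         \<and> Vfun C K \<alpha> \<theta> F T t x - Vfun C K \<alpha> \<theta> F T t x' \<le> phifun C K \<alpha> \<theta> F T \<gamma> t (x - x') x"
proof -
  note th = assms(6) and al = assms(4) and T2 = assms(3)
  have Kp: "\<And>t. t < T \<Longrightarrow> 0 \<le> K t" using assms(7) by blast
  have RD: "\<And>t. t < T \<Longrightarrow> real_distribution (M t)" using assms(8) by blast
  have cb: "\<And>t Mx. t < T \<Longrightarrow> \<exists>b. \<forall>z\<le>b. Mx < C t z"
    using assms(12) coerc_bot by blast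
  have ct: "\<And>t Mx. t < T \<Longrightarrow> \<exists>b. \<forall>z\<ge>b. Mx < C t z"
    using assms(12) coerc_top by blast
  have gp: "\<And>t. t < T \<Longrightarrow> 0 \<le> \<gamma> t" using assms(14) by blast
  have Lip: "\<And>t x y. t < T \<Longrightarrow> \<bar>C t x - C t y\<bar> \<le> \<gamma> t * \<bar>x - y\<bar>" using assms(14) by blast
  have FM: "\<And>t. F t = cdf (M t)" by (simp add: F_def fun_eq_iff)
  define P where "P t \<longleftrightarrow> (\<forall>x x'. x' \<le> x \<longrightarrow>
           Hfun C K \<alpha> \<theta> F T t x - Hfun C K \<alpha> \<theta> F T t x' \<le> psifun C K \<alpha> \<theta> F T \<gamma> t (x - x') x
         \<and> Vfun C K \<alpha> \<theta> F T t x - Vfun C K \<alpha> \<theta> F T t x' \<le> phifun C K \<alpha> \<theta> F T \<gamma> t (x - x') x)" for t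
  have key: "j < T \<Longrightarrow> P (T - 1 - j)" for j
  proof (induction j)
    case 0
    let ?t = "T - 1"
    have tT: "?t < T" using T2 by simp
    have H: "Hfun C K \<alpha> \<theta> F T ?t = C ?t" by (simp add: Hfun_def)
    have Sf: "Sfun C K \<alpha> \<theta> F T ?t = Cm C ?t" by (simp add: Sfun_def)
    have sf: "sfun C K \<alpha> \<theta> F T ?t = sLast C K T" by (simp add: sfun_def)
    have ps: "psifun C K \<alpha> \<theta> F T \<gamma> ?t = (\<lambda>x y. \<gamma> ?t * x)" by (simp add: psifun_def)
    have ph: "phifun C K \<alpha> \<theta> F T \<gamma> ?t = (\<lambda>x y. if y < sLast C K T then 0 else \<gamma> ?t * x)"
      using sf by (simp add: phifun_def)
    have V: "Vfun C K \<alpha> \<theta> F T ?t = Vof (C ?t) (Cm C ?t) (sLast C K T) (K ?t)"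
      using H Sf sf by (simp add: Vfun_def[abs_def])
    have sL: "C ?t (sLast C K T) = C ?t (Cm C ?t) + K ?t"
      by (rule sLast_prop[OF Lip[OF tT] gp[OF tT] cb[OF tT] Kp[OF tT]]) auto
    have Hb: "C ?t x - C ?t x' \<le> \<gamma> ?t * (x - x')" if "x' \<le> x" for x x'
      using Lip[OF tT, of x x'] that by simp
    show ?case unfolding P_def
    proof (intro allI impI conjI)
      fix x x' :: real assume xx: "x' \<le> x"
      show "Hfun C K \<alpha> \<theta> F T (T - 1 - 0) x - Hfun C K \<alpha> \<theta> F T (T - 1 - 0) x'
            \<le> psifun C K \<alpha> \<theta> F T \<gamma> (T - 1 - 0) (x - x') x"
        using Hb[OF xx] H ps by simp
      have "Vof (C ?t) (Cm C ?t) (sLast C K T) (K ?t) x - Vof (C ?t) (Cm C ?t) (sLast C K T) (K ?t) x'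
          \<le> phi_of (sLast C K T) (\<lambda>x y. \<gamma> ?t * x) (x - x') x"
        by (rule V_bound[where ps="\<lambda>x y. \<gamma> ?t * x", OF Hb]) (use sL xx in auto)
      also have "\<dots> \<le> (if x < sLast C K T then 0 else \<gamma> ?t * (x - x'))"
        using gp[OF tT] by (auto simp: phi_of_def intro: mult_left_mono)
      finally show "Vfun C K \<alpha> \<theta> F T (T - 1 - 0) x - Vfun C K \<alpha> \<theta> F T (T - 1 - 0) x'
            \<le> phifun C K \<alpha> \<theta> F T \<gamma> (T - 1 - 0) (x - x') x"
        using V ph by simp
    qed
  next
    case (Suc i)
    define t where "t = T - 1 - Suc i"
    have tT: "t < T" and t1: "Suc t < T" and ti: "T - 1 - Suc t = i" and ti2: "T - 2 - i = t"
      and tS: "T - 1 - t = Suc i" and tne: "t \<noteq> T - 1"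
      using Suc.prems by (auto simp: t_def)
    have "Suc t = T - 1 - i" using Suc.prems by (simp add: t_def)
    moreover have "P (T - 1 - i)" using Suc.IH Suc.prems by simp
    ultimately have IH: "P (Suc t)" by simp
    obtain H' S' s' Ib' where st': "stages C K \<alpha> \<theta> F T i = (H', S', s', Ib')" by (metis prod_cases4)
    obtain H S s Ib where st: "step C K \<alpha> \<theta> F t (H', S', s', Ib') = (H, S, s, Ib)" by (metis prod_cases4)
    have stS: "stages C K \<alpha> \<theta> F T (Suc i) = (H, S, s, Ib)" using st st' ti2 by simp
    have H't: "Hfun C K \<alpha> \<theta> F T (Suc t) = H'" "Sfun C K \<alpha> \<theta> F T (Suc t) = S'"
      "sfun C K \<alpha> \<theta> F T (Suc t) = s'"
      using st' ti by (simp_all add: Hfun_def Sfun_def sfun_def)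
    have Ht: "Hfun C K \<alpha> \<theta> F T t = H" "Sfun C K \<alpha> \<theta> F T t = S" "sfun C K \<alpha> \<theta> F T t = s"
      using stS tS by (simp_all add: Hfun_def Sfun_def sfun_def)
    have Hdef: "H = (\<lambda>y. C t y + \<alpha> * (\<Sum>k. Vof H' S' s' (K (Suc t)) (y - zg \<theta> (int k - 1)) * fprob \<theta> F t (int k - 1)))"
      using step_H[of C K \<alpha> \<theta> F t H' S' s' Ib'] st by simp
    have V't: "Vfun C K \<alpha> \<theta> F T (Suc t) = Vof H' S' s' (K (Suc t))"
      using H't by (simp add: Vfun_def[abs_def])
    have Vt: "Vfun C K \<alpha> \<theta> F T t = Vof H S s (K t)"
      using Ht by (simp add: Vfun_def[abs_def])
    have pst: "psifun C K \<alpha> \<theta> F T \<gamma> t = psi_step \<gamma> \<alpha> \<theta> F s' t (phifun C K \<alpha> \<theta> F T \<gamma> (Suc t))"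
      using tne H't by (simp add: psifun_def)
    have pht: "phifun C K \<alpha> \<theta> F T \<gamma> t = phi_of s (psifun C K \<alpha> \<theta> F T \<gamma> t)"
    proof -
      have "T - Suc i = Suc t" using Suc.prems by (simp add: t_def)
      thus ?thesis using tS ti ti2 Ht tne H't by (simp add: phifun_def psifun_def)
    qed
    have Hb: "H x - H x' \<le> psifun C K \<alpha> \<theta> F T \<gamma> t (x - x') x" if xx: "x' \<le> x" for x x'
      unfolding Hdef pst
    proof (rule H_step_bound[where cc = "H' S' + K (Suc t)"])
      show "0 < \<theta>" by (rule th)
      show "0 < \<alpha>" by (rule al)
      show "\<And>n. 0 \<le> fprob \<theta> F t n" using fprob_nonneg[where F=F and t=t, OF RD[OF tT] FM[of t] th] .
      show "summable (\<lambda>k. fprob \<theta> F t (int k - 1))" using fprob_summable[where F=F and t=t, OF RD[OF tT] FM[of t] th] .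
      show "\<And>y. y < s' \<Longrightarrow> Vof H' S' s' (K (Suc t)) y = H' S' + K (Suc t)" by (simp add: Vof_def)
      show "\<And>x x'. x' \<le> x \<Longrightarrow> Vof H' S' s' (K (Suc t)) x - Vof H' S' s' (K (Suc t)) x'
               \<le> phifun C K \<alpha> \<theta> F T \<gamma> (Suc t) (x - x') x"
        using IH V't by (simp add: P_def)
      show "\<And>x y. y < s' \<Longrightarrow> phifun C K \<alpha> \<theta> F T \<gamma> (Suc t) x y = 0"
        using phifun_zero[OF t1] H't by simp
      show "\<And>x y. \<bar>C t x - C t y\<bar> \<le> \<gamma> t * \<bar>x - y\<bar>" using Lip[OF tT] .
      show "x' \<le> x" by (rule xx)
    qed
    have sS: "H s \<le> H S + K t"
      by (rule step_sS[OF th Kp[OF tT] cb[OF tT] ct[OF tT] st])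
    have "P t" unfolding P_def
    proof (intro allI impI conjI)
      fix x x' :: real assume xx: "x' \<le> x"
      show "Hfun C K \<alpha> \<theta> F T t x - Hfun C K \<alpha> \<theta> F T t x' \<le> psifun C K \<alpha> \<theta> F T \<gamma> t (x - x') x"
        using Hb[OF xx] Ht by simp
      show "Vfun C K \<alpha> \<theta> F T t x - Vfun C K \<alpha> \<theta> F T t x' \<le> phifun C K \<alpha> \<theta> F T \<gamma> t (x - x') x"
        unfolding Vt pht by (rule V_bound[where ps="psifun C K \<alpha> \<theta> F T \<gamma> t", OF Hb sS xx])
    qed
    thus ?case by (simp add: t_def)
  qed
  show ?thesis
  proof (rule allI, rule impI)
    fix t assume "t < T"
    hence "P (T - 1 - (T - 1 - t))" using key[of "T - 1 - t"] by simp
    moreover have "T - 1 - (T - 1 - t) = t" using \<open>t < T\<close> by simp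
    ultimately show "\<forall>x x'. x' \<le> x \<longrightarrow>
           Hfun C K \<alpha> \<theta> F T t x - Hfun C K \<alpha> \<theta> F T t x' \<le> psifun C K \<alpha> \<theta> F T \<gamma> t (x - x') x
         \<and> Vfun C K \<alpha> \<theta> F T t x - Vfun C K \<alpha> \<theta> F T t x' \<le> phifun C K \<alpha> \<theta> F T \<gamma> t (x - x') x"
      by (simp add: P_def)
  qed
qed

end
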